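(* Let $k:[1,\infty)\to(0,\infty)$ be a nonincreasing function such that $\int_1^\infty\frac{k(s)}{s}\,ds<\frac1{10}$. Let $x:[1,\infty)\to(0,\infty)$ be a differentiable function such that for all $t\ge1$, $$x(t)\le t\,x(1)\quad\text{and}\quad x'(t)\le\int_t^\infty x(s)\frac{k(s)}{s^2}\,ds.$$ Then there exists a constant $C>0$ depending only on $k$ such that $x(t)\le C\,x(1)$ for all $t\ge1$. *)

theory Defs
  imports "HOL-Analysis.Analysis"
begin

end

theory Submission
  imports Defs
begin

lemma ks_int_sub:
  fixes k :: "real \<Rightarrow> real"
  assumes k_pos: "\<And>s. s \<ge> 1 \<Longrightarrow> k s > 0"
    and k_int: "(\<lambda>s. k s / s) integrable_on {1..}"
    and u: "u \<ge> 1"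
  shows "(\<lambda>s. k s / s) integrable_on {u..}"
    and "integral {u..} (\<lambda>s. k s / s) \<le> integral {1..} (\<lambda>s. k s / s)"
proof -
  have knn: "\<And>s. s \<in> {1..} \<Longrightarrow> 0 \<le> k s / s"
    using k_pos by (simp add: less_imp_le)
  have "(\<lambda>s. k s / s) absolutely_integrable_on {1..}"
    by (rule nonnegative_absolutely_integrable_1[OF k_int knn])
  then have "(\<lambda>s. k s / s) absolutely_integrable_on {u..}"
    by (rule set_integrable_subset) (use u in auto)
  then show 1: "(\<lambda>s. k s / s) integrable_on {u..}"
    using absolutely_integrable_on_def by blast
  show "integral {u..} (\<lambda>s. k s / s) \<le> integral {1..} (\<lambda>s. k s / s)"
    by (rule integral_subset_le[OF _ 1 k_int]) (use u knn in auto)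
qed

lemma step:
  fixes k x x' :: "real \<Rightarrow> real" and a C e I :: real
  assumes k_pos: "\<And>s. s \<ge> 1 \<Longrightarrow> k s > 0"
    and k_noninc: "\<And>s t. 1 \<le> s \<Longrightarrow> s \<le> t \<Longrightarrow> k t \<le> k s"
    and k_int: "(\<lambda>s. k s / s) integrable_on {1..}"
    and I_def: "I = integral {1..} (\<lambda>s. k s / s)"
    and a: "a = x 1" "a > 0" and C: "C \<ge> 0" and e: "e \<ge> 0"
    and der: "\<forall>t\<ge>1. (x has_real_derivative x' t) (at t within {1..})"
    and x'b: "\<forall>t\<ge>1. x' t \<le> integral {t..} (\<lambda>s. x s * k s / s\<^sup>2)"
    and hyp: "\<And>s. s \<ge> 1 \<Longrightarrow> x s \<le> a * (C + e * s)"
    and t: "t \<ge> 1"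
  shows "x t \<le> a + a * C * I + a * e * I * t"
proof -
  have knn: "\<And>s. s \<ge> 1 \<Longrightarrow> 0 \<le> k s / s"
    using k_pos by (simp add: less_imp_le)
  have I0: "I \<ge> 0" unfolding I_def
    by (rule integral_nonneg[OF k_int]) (use knn in auto)
  have xd: "x' u \<le> a * C * (k u / u) + a * e * I" if u: "u \<ge> 1" for u
  proof -
    let ?f = "\<lambda>s. x s * k s / s\<^sup>2"
    let ?g = "\<lambda>s. a * C * k u * (1 / s ^ 2) + a * e * (k s / s)"
    have rhs0: "0 \<le> a * C * (k u / u) + a * e * I"
      using a C e I0 knn[OF u] by (intro add_nonneg_nonneg mult_nonneg_nonneg) auto
    have "integral {u..} ?f \<le> a * C * (k u / u) + a * e * I"
    proof (cases "?f integrable_on {u..}")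
      case False
      then show ?thesis using rhs0 by (simp add: not_integrable_integral)
    next
      case True
      have p: "((\<lambda>s. 1 / s ^ 2) has_integral 1 / (real (2 - 1) * u ^ (2 - 1))) {u..}"
        by (rule has_integral_inverse_power_to_inf) (use u in auto)
      then have p': "((\<lambda>s. 1 / s ^ 2) has_integral 1 / u) {u..}" by simp
      have ks: "(\<lambda>s. k s / s) integrable_on {u..}"
        and ksle: "integral {u..} (\<lambda>s. k s / s) \<le> I"
        using ks_int_sub[OF k_pos k_int u] I_def by auto
      have ghas: "(?g has_integral (a * C * k u * (1 / u) + a * e * integral {u..} (\<lambda>s. k s / s))) {u..}"
        by (intro has_integral_add has_integral_mult_right p' integrable_integral ks)
      have gint: "?g integrable_on {u..}" using ghas by (auto simp: integrable_on_def)
      have gval: "integral {u..} ?g = a * C * k u * (1 / u) + a * e * integral {u..} (\<lambda>s. k s / s)"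
        using ghas by (rule integral_unique)
      have "integral {u..} ?f \<le> integral {u..} ?g"
      proof (rule integral_le[OF True gint])
        fix s assume s: "s \<in> {u..}"
        then have s1: "s \<ge> 1" "s \<ge> u" "s > 0" using u by auto
        have ks0: "0 \<le> k s" using k_pos s1 by (simp add: less_imp_le)
        have "x s * k s / s\<^sup>2 \<le> a * (C + e * s) * k s / s\<^sup>2"
          using hyp[OF s1(1)] ks0 by (simp add: divide_right_mono mult_right_mono)
        also have "\<dots> = a * C * k s * (1 / s^2) + a * e * (k s / s)"
          using s1 by (simp add: field_simps power2_eq_square)
        also have "\<dots> \<le> a * C * k u * (1 / s^2) + a * e * (k s / s)"
          using k_noninc[OF u s1(2)] a C s1
          by (intro add_mono[OF _ order_refl] mult_right_mono mult_left_mono) auto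
        finally show "?f s \<le> ?g s" .
      qed
      also have "\<dots> \<le> a * C * (k u / u) + a * e * I"
        using gval ksle a e by (simp add: mult_left_mono)
      finally show ?thesis .
    qed
    then show ?thesis using x'b u by force
  qed
  have ftc: "(x' has_integral (x t - x 1)) {1..t}"
  proof (rule fundamental_theorem_of_calculus)
    show "1 \<le> t" using t .
    fix s assume s: "s \<in> {1..t}"
    then have "(x has_real_derivative x' s) (at s within {1..})" using der by auto
    then have "(x has_real_derivative x' s) (at s within {1..t})"
      by (rule DERIV_subset) auto
    then show "(x has_vector_derivative x' s) (at s within {1..t})"
      by (simp add: has_real_derivative_iff_has_vector_derivative)
  qed
  have kint1: "(\<lambda>s. k s / s) integrable_on {1..t}"
    by (rule integrable_on_subinterval[OF k_int]) auto
  have kle1: "integral {1..t} (\<lambda>s. k s / s) \<le> I"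
    unfolding I_def by (rule integral_subset_le[OF _ kint1 k_int]) (use knn in auto)
  let ?h = "\<lambda>s. a * C * (k s / s) + a * e * I"
  have hint: "(?h has_integral a * C * integral {1..t} (\<lambda>s. k s / s) + a * e * I * (t - 1)) {1..t}"
    using kint1 t by (intro has_integral_add has_integral_mult_right) (auto intro: integrable_integral has_integral_const_real[THEN has_integral_eq_rhs] simp: has_integral_const_real)
  have "x t - x 1 \<le> a * C * integral {1..t} (\<lambda>s. k s / s) + a * e * I * (t - 1)"
    by (rule has_integral_le[OF ftc hint]) (use xd in auto)
  also have "\<dots> \<le> a * C * I + a * e * I * t"
    using kle1 a C e I0 t by (smt (verit, best) mult_left_mono mult_nonneg_nonneg)
  finally show ?thesis using a by simp
qed

theorem lemma4p12:
  fixes k :: "real \<Rightarrow> real"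
  assumes k_pos: "\<And>s. s \<ge> 1 \<Longrightarrow> k s > 0"
    and k_noninc: "\<And>s t. 1 \<le> s \<Longrightarrow> s \<le> t \<Longrightarrow> k t \<le> k s"
    and k_int: "(\<lambda>s. k s / s) integrable_on {1..}"
    and k_small: "integral {1..} (\<lambda>s. k s / s) < 1 / 10"
  shows "\<exists>C>0. \<forall>(x :: real \<Rightarrow> real) (x' :: real \<Rightarrow> real).
           (\<forall>t\<ge>1. x t > 0) \<and>
           (\<forall>t\<ge>1. (x has_real_derivative x' t) (at t within {1..})) \<and>
           (\<forall>t\<ge>1. x t \<le> t * x 1) \<and>
           (\<forall>t\<ge>1. x' t \<le> integral {t..} (\<lambda>s. x s * k s / s\<^sup>2))
           \<longrightarrow> (\<forall>t\<ge>1. x t \<le> C * x 1)"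
proof -
  define I where "I = integral {1..} (\<lambda>s. k s / s)"
  have I0: "I \<ge> 0" unfolding I_def
    by (rule integral_nonneg[OF k_int]) (use k_pos in \<open>auto simp: less_imp_le\<close>)
  have I1: "I < 1" using k_small I_def by simp
  define C where "C = 1 / (1 - I)"
  have Cpos: "C > 0" using I1 by (simp add: C_def)
  have Ceq: "1 + C * I = C" using I1 by (simp add: C_def field_simps)
  show ?thesis
  proof (intro exI[of _ C] conjI Cpos allI impI)
    fix x x' :: "real \<Rightarrow> real" and t :: real
    assume H: "(\<forall>t\<ge>1. x t > 0) \<and>
           (\<forall>t\<ge>1. (x has_real_derivative x' t) (at t within {1..})) \<and>
           (\<forall>t\<ge>1. x t \<le> t * x 1) \<and>
           (\<forall>t\<ge>1. x' t \<le> integral {t..} (\<lambda>s. x s * k s / s\<^sup>2))"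
    assume t: "t \<ge> 1"
    define a where "a = x 1"
    have apos: "a > 0" using H a_def by auto
    have ind: "\<forall>s\<ge>1. x s \<le> a * (C + I ^ n * s)" for n
    proof (induction n)
      case 0
      show ?case
      proof (intro allI impI)
        fix s :: real assume "s \<ge> 1"
        then have "x s \<le> s * a" using H a_def by auto
        also have "\<dots> \<le> a * (C + I ^ 0 * s)" using apos Cpos by (simp add: algebra_simps)
        finally show "x s \<le> a * (C + I ^ 0 * s)" .
      qed
    next
      case (Suc n)
      show ?case
      proof (intro allI impI)
        fix s :: real assume s: "s \<ge> 1"
        have "x s \<le> a + a * C * I + a * I ^ n * I * s"
          using step[of k I a x C "I ^ n" x' s] k_pos k_noninc k_int I_def a_def apos s
             Cpos I0 H Suc.IH by (simp add: less_imp_le)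
        also have "\<dots> = a * (1 + C * I) + a * (I ^ Suc n * s)" by (simp add: algebra_simps)
        also have "\<dots> = a * (C + I ^ Suc n * s)" using Ceq by (simp add: algebra_simps)
        finally show "x s \<le> a * (C + I ^ Suc n * s)" .
      qed
    qed
    show "x t \<le> C * x 1"
    proof (rule ccontr)
      assume "\<not> x t \<le> C * x 1"
      then have gap: "x t - a * C > 0" using a_def by (simp add: algebra_simps)
      then have "(x t - a * C) / (a * t) > 0" using apos t by simp
      then obtain n where n: "I ^ n < (x t - a * C) / (a * t)"
        using real_arch_pow_inv I1 by blast
      then have "a * t * I ^ n < x t - a * C" using apos t by (simp add: field_simps)
      moreover have "x t \<le> a * (C + I ^ n * t)" using ind t by blast
      ultimately show False by (simp add: algebra_simps)
    qed
  qed
qed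

end
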